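(* Let $H$ be a complex Hilbert space and let $Q \in \mathcal{L}(H)$ be an orthogonal projection. Then $Q$ satisfies the property $\mathcal{AN}^*$ if and only if the null space $\mathrm{Ker}\,Q$ is finite dimensional or the range $Q(H)$ is finite dimensional.
   Context: $\mathcal{L}(H)$ is the space of bounded linear operators on $H$. For a closed subspace $M \neq \{0\}$ of $H$ and $T \in \mathcal{L}(H)$, write $[T|_M] := \inf\{\|Tx\| : x \in M, \|x\|=1\}$; $T|_M$ satisfies $\mathcal{N}^*$ if there is $x_0 \in M$ with $\|x_0\|=1$ and $\|Tx_0\| = [T|_M]$. $T$ satisfies the property $\mathcal{AN}^*$ if $T|_M$ satisfies $\mathcal{N}^*$ for every closed subspace $M \neq \{0\}$ of $H$. *)

theory Defs
  imports "HOL-Analysis.Analysis"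
begin

text \<open>A complex Hilbert space is modelled as a real Hilbert space
  (type class real_inner + complete_space) together with a complex structure J
  (multiplication by the imaginary unit): a real-linear map with J (J x) = - x
  which preserves the real inner product (the real part of the complex one).\<close>

definition complex_structure :: "('a::real_inner \<Rightarrow> 'a) \<Rightarrow> bool" where
  "complex_structure J \<longleftrightarrow> linear J \<and> (\<forall>x. J (J x) = - x) \<and> (\<forall>x y. inner (J x) (J y) = inner x y)"

definition scaleC :: "('a::real_vector \<Rightarrow> 'a) \<Rightarrow> complex \<Rightarrow> 'a \<Rightarrow> 'a" where
  "scaleC J c x = Re c *\<^sub>R x + Im c *\<^sub>R J x"

text \<open>Complex inner product (linear in the first argument), with real part the real inner product.\<close>
definition cinner :: "('a::real_inner \<Rightarrow> 'a) \<Rightarrow> 'a \<Rightarrow> 'a \<Rightarrow> complex" where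
  "cinner J x y = Complex (inner x y) (inner x (J y))"

definition bounded_clinear :: "('a::real_normed_vector \<Rightarrow> 'a) \<Rightarrow> ('a \<Rightarrow> 'a) \<Rightarrow> bool" where
  "bounded_clinear J T \<longleftrightarrow> bounded_linear T \<and> (\<forall>x. T (J x) = J (T x))"

definition closed_csubspace :: "('a::real_normed_vector \<Rightarrow> 'a) \<Rightarrow> 'a set \<Rightarrow> bool" where
  "closed_csubspace J M \<longleftrightarrow> closed M \<and> subspace M \<and> (\<forall>x\<in>M. J x \<in> M)"

definition orth_proj :: "('a::real_inner \<Rightarrow> 'a) \<Rightarrow> ('a \<Rightarrow> 'a) \<Rightarrow> bool" where
  "orth_proj J Q \<longleftrightarrow> bounded_clinear J Q \<and> (\<forall>x. Q (Q x) = Q x)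
      \<and> (\<forall>x y. cinner J (Q x) y = cinner J x (Q y))"

definition cspan :: "('a::real_vector \<Rightarrow> 'a) \<Rightarrow> 'a set \<Rightarrow> 'a set" where
  "cspan J B = {\<Sum>b\<in>F. scaleC J (c b) b | F c. finite F \<and> F \<subseteq> B}"

definition cfinite_dim :: "('a::real_vector \<Rightarrow> 'a) \<Rightarrow> 'a set \<Rightarrow> bool" where
  "cfinite_dim J S \<longleftrightarrow> (\<exists>B. finite B \<and> B \<subseteq> S \<and> cspan J B = S)"

definition lower_bound_on :: "('a::real_normed_vector \<Rightarrow> 'a) \<Rightarrow> 'a set \<Rightarrow> real" where
  "lower_bound_on T M = Inf {norm (T x) | x. x \<in> M \<and> norm x = 1}"

definition N_star :: "('a::real_normed_vector \<Rightarrow> 'a) \<Rightarrow> 'a set \<Rightarrow> bool" where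
  "N_star T M \<longleftrightarrow> (\<exists>x0\<in>M. norm x0 = 1 \<and> norm (T x0) = lower_bound_on T M)"

definition AN_star :: "('a::real_normed_vector \<Rightarrow> 'a) \<Rightarrow> ('a \<Rightarrow> 'a) \<Rightarrow> bool" where
  "AN_star J T \<longleftrightarrow> (\<forall>M. closed_csubspace J M \<and> M \<noteq> {0} \<longrightarrow> N_star T M)"

end

theory Submission
  imports Defs
begin



lemma compact_span_cball:
  fixes B :: "'a::real_normed_vector set"
  assumes "finite B"
  shows "compact (span B \<inter> cball 0 r)"
  using assms
proof (induction B arbitrary: r rule: finite_induct)
  case empty
  have "span {} \<inter> cball (0::'a) r \<subseteq> {0}" by auto
  then show ?case by (meson finite.emptyI finite_imp_compact finite_insert finite_subset)
next
  case (insert b B)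
  show ?case
  proof (cases "b \<in> span B")
    case True
    then show ?thesis using insert.IH by (simp add: span_redundant)
  next
    case False
    define K where "K = span B \<inter> cball 0 (2 * norm b)"
    have cK: "compact K" using insert.IH K_def by auto
    have K0: "0 \<in> K" by (simp add: K_def span_zero)
    have nb: "-b \<notin> K" using False K_def span_neg by fastforce
    have b0: "b \<noteq> 0" using False span_zero by auto
    define d where "d = min (norm b) (infdist (-b) K)"
    have dpos: "d > 0" unfolding d_def using b0 infdist_pos_not_in_closed[OF compact_imp_closed[OF cK] _ nb] K0 by auto
    have low: "norm (b + y) \<ge> d" if "y \<in> span B" for y
    proof (cases "norm y \<le> 2 * norm b")
      case True
      then have "y \<in> K" using that K_def by auto
      then have "infdist (-b) K \<le> dist (-b) y" by (rule infdist_le)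
      also have "dist (-b) y = norm (b + y)"
        by (simp add: dist_norm) (metis add.commute diff_minus_eq_add norm_minus_commute)
      finally show ?thesis unfolding d_def by linarith
    next
      case False
      have "norm y - norm b \<le> norm (b + y)"
        using norm_triangle_ineq4[of "b+y" b] by simp
      then show ?thesis unfolding d_def using False by linarith
    qed
    define R where "R = r + r / d * norm b"
    define f where "f = (\<lambda>p::real \<times> 'a. fst p *\<^sub>R b + snd p)"
    have eq: "span (insert b B) \<inter> cball 0 r = f ` ({-(r/d)..r/d} \<times> (span B \<inter> cball 0 R)) \<inter> cball 0 r"
    proof (intro equalityI subsetI)
      fix x assume x: "x \<in> span (insert b B) \<inter> cball 0 r"
      then obtain k where k: "x - k *\<^sub>R b \<in> span B" by (auto simp: span_insert)
      define y where "y = x - k *\<^sub>R b"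
      have nx: "norm x \<le> r" using x by auto
      have kb: "\<bar>k\<bar> * d \<le> norm x"
      proof (cases "k = 0")
        case True then show ?thesis by simp
      next
        case False
        have "(1/k) *\<^sub>R y \<in> span B" using k y_def span_scale by blast
        then have "d \<le> norm (b + (1/k) *\<^sub>R y)" by (rule low)
        then have "\<bar>k\<bar> * d \<le> \<bar>k\<bar> * norm (b + (1/k) *\<^sub>R y)" by (simp add: mult_left_mono)
        also have "\<bar>k\<bar> * norm (b + (1/k) *\<^sub>R y) = norm (k *\<^sub>R (b + (1/k) *\<^sub>R y))" by simp
        also have "k *\<^sub>R (b + (1/k) *\<^sub>R y) = x" using False by (simp add: y_def algebra_simps)
        finally show ?thesis .
      qed
      then have kr: "\<bar>k\<bar> \<le> r / d" using dpos nx by (simp add: field_simps)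
      have "norm y \<le> norm x + \<bar>k\<bar> * norm b"
        unfolding y_def by (metis norm_scaleR norm_triangle_ineq4)
      also have "\<dots> \<le> r + r / d * norm b" using nx kr by (intro add_mono mult_right_mono) auto
      finally have "norm y \<le> R" unfolding R_def .
      then have "(k, y) \<in> {-(r/d)..r/d} \<times> (span B \<inter> cball 0 R)" using kr k y_def by auto
      moreover have "x = f (k, y)" by (simp add: f_def y_def)
      ultimately show "x \<in> f ` ({-(r/d)..r/d} \<times> (span B \<inter> cball 0 R)) \<inter> cball 0 r" using x by blast
    next
      fix x assume "x \<in> f ` ({-(r/d)..r/d} \<times> (span B \<inter> cball 0 R)) \<inter> cball 0 r"
      then obtain k y where "y \<in> span B" "x = k *\<^sub>R b + y" "x \<in> cball 0 r" unfolding f_def by force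
      then show "x \<in> span (insert b B) \<inter> cball 0 r"
        by (auto simp: span_insert intro!: exI[of _ k])
    qed
    have "continuous_on UNIV f" unfolding f_def by (intro continuous_intros)
    then have "compact (f ` ({-(r/d)..r/d} \<times> (span B \<inter> cball 0 R)))"
      using insert.IH by (intro compact_continuous_image compact_Times) (auto intro: continuous_on_subset)
    then show ?thesis unfolding eq by auto
  qed
qed




locale cstr =
  fixes J :: "'a::{real_inner,complete_space} \<Rightarrow> 'a"
  assumes cs: "complex_structure J"
begin

lemma J_linear: "linear J" using cs by (simp add: complex_structure_def)
lemma J_J[simp]: "J (J x) = - x" using cs by (simp add: complex_structure_def)
lemma J_inner[simp]: "inner (J x) (J y) = inner x y" using cs by (simp add: complex_structure_def)
lemma J_skew: "inner (J x) y = - inner x (J y)"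
proof -
  have "inner (J x) y = inner (J (J x)) (J y)" by (simp only: J_inner)
  also have "\<dots> = - inner x (J y)" by (simp only: J_J inner_minus_left)
  finally show ?thesis .
qed
lemma J_orth[simp]: "inner x (J x) = 0"
  using J_skew[of x x] by (simp add: inner_commute)
lemma norm_J[simp]: "norm (J x) = norm x"
  by (simp add: norm_eq_sqrt_inner)
lemma J_zero[simp]: "J 0 = 0" using J_linear linear_0 by blast
lemma J_bl: "bounded_linear J"
  by (rule bounded_linear_intro[where K=1]) (auto simp: linear_add[OF J_linear] linear_scale[OF J_linear])

end

locale oproj = cstr +
  fixes Q :: "'a::{real_inner,complete_space} \<Rightarrow> 'a"
  assumes op: "orth_proj J Q"
begin

lemma Q_bl: "bounded_linear Q" using op by (simp add: orth_proj_def bounded_clinear_def)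
lemma Q_lin: "linear Q" using Q_bl bounded_linear.linear by blast
lemma QJ: "Q (J x) = J (Q x)" using op by (simp add: orth_proj_def bounded_clinear_def)
lemma QQ[simp]: "Q (Q x) = Q x" using op by (simp add: orth_proj_def)
lemma Q_sa: "inner (Q x) y = inner x (Q y)"
proof -
  have "cinner J (Q x) y = cinner J x (Q y)" using op unfolding orth_proj_def by blast
  then show ?thesis unfolding cinner_def by simp
qed
lemma Q_diff: "Q (x - y) = Q x - Q y" using linear_diff[OF Q_lin] .
lemma Q_add: "Q (x + y) = Q x + Q y" using linear_add[OF Q_lin] .
lemma Q_scale: "Q (c *\<^sub>R x) = c *\<^sub>R Q x" using linear_scale[OF Q_lin] .
lemma Q_zero[simp]: "Q 0 = 0" using linear_0[OF Q_lin] .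

lemma rk_orth: "Q a = a \<Longrightarrow> Q b = 0 \<Longrightarrow> inner a b = 0"
proof -
  assume a: "Q a = a" and b: "Q b = 0"
  have "inner a b = inner (Q a) b" using a by simp
  also have "\<dots> = inner a (Q b)" by (rule Q_sa)
  finally show "inner a b = 0" using b by simp
qed

lemma QP_orth: "inner (Q x) (x - Q x) = 0"
  by (rule rk_orth) (auto simp: Q_diff)

lemma pyth: "(norm x)^2 = (norm (Q x))^2 + (norm (x - Q x))^2"
proof -
  have "(norm (Q x + (x - Q x)))^2 = (norm (Q x))^2 + (norm (x - Q x))^2"
    using QP_orth by (intro norm_add_Pythagorean) (simp add: orthogonal_def)
  then show ?thesis by simp
qed

end

lemma cfin_span:
  assumes "cfinite_dim J S"
  shows "\<exists>B. finite B \<and> S \<subseteq> span B"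
proof -
  obtain B where B: "finite B" "cspan J B = S" using assms unfolding cfinite_dim_def by blast
  have "S \<subseteq> span (B \<union> J ` B)"
  proof
    fix x assume "x \<in> S"
    then have "x \<in> cspan J B" using B(2) by simp
    then obtain F c where x: "x = (\<Sum>b\<in>F. scaleC J (c b) b)" "finite F" "F \<subseteq> B"
      unfolding cspan_def by blast
    have "scaleC J (c b) b \<in> span (B \<union> J ` B)" if "b \<in> F" for b
    proof -
      have b1: "b \<in> span (B \<union> J ` B)" using that x(3) by (intro span_base) blast
      have b2: "J b \<in> span (B \<union> J ` B)" using that x(3) by (intro span_base) blast
      show ?thesis unfolding scaleC_def by (rule span_add[OF span_scale[OF b1] span_scale[OF b2]])
    qed
    then show "x \<in> span (B \<union> J ` B)" unfolding x(1) by (rule span_sum)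
  qed
  then show ?thesis using B(1) by (intro exI[of _ "B \<union> J ` B"]) auto
qed

lemma N_star_of_min:
  assumes "x0 \<in> M" "norm x0 = 1" "\<And>x. x \<in> M \<Longrightarrow> norm x = 1 \<Longrightarrow> norm (T x0) \<le> norm (T x)"
  shows "N_star T M"
proof -
  have "lower_bound_on T M = norm (T x0)"
    unfolding lower_bound_on_def by (rule cInf_eq_minimum) (use assms in auto)
  then show ?thesis using assms unfolding N_star_def by auto
qed

lemma unit_exists:
  fixes M :: "'a::real_normed_vector set"
  assumes "subspace M" "M \<noteq> {0}"
  shows "\<exists>x\<in>M. norm x = 1"
proof -
  obtain x where x: "x \<in> M" "x \<noteq> 0" using assms subspace_0 by blast
  have "inverse (norm x) *\<^sub>R x \<in> M" using assms(1) x(1) by (rule subspace_scale)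
  moreover have "norm (inverse (norm x) *\<^sub>R x) = 1" using x(2) by simp
  ultimately show ?thesis by blast
qed




lemma closed_unit_sphere: "closed (sphere (0::'a::real_normed_vector) 1)"
proof -
  have "sphere (0::'a) 1 = {x. norm x = 1}" by (auto simp: sphere_def)
  moreover have "closed {x::'a. norm x = 1}"
    by (intro closed_Collect_eq continuous_intros)
  ultimately show ?thesis by simp
qed

context oproj begin

lemma case1:
  assumes fin: "cfinite_dim J (range Q)" and M: "closed_csubspace J M" "M \<noteq> {0}"
  shows "N_star Q M"
proof -
  have sM: "subspace M" and cM: "closed M" using M by (auto simp: closed_csubspace_def)
  obtain B1 where B1: "finite B1" "range Q \<subseteq> span B1" using cfin_span[OF fin] by blast
  show ?thesis
  proof (cases "\<exists>x\<in>M. x \<noteq> 0 \<and> Q x = 0")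
    case True
    then obtain x where x: "x \<in> M" "x \<noteq> 0" "Q x = 0" by blast
    have "inverse (norm x) *\<^sub>R x \<in> M" using sM x(1) by (rule subspace_scale)
    moreover have "norm (inverse (norm x) *\<^sub>R x) = 1" using x(2) by simp
    moreover have "Q (inverse (norm x) *\<^sub>R x) = 0" using x(3) by (simp add: Q_scale)
    ultimately show ?thesis
      by (intro N_star_of_min[of "inverse (norm x) *\<^sub>R x"]) auto
  next
    case False
    then have inj: "\<And>x. x \<in> M \<Longrightarrow> Q x = 0 \<Longrightarrow> x = 0" by blast
    have sV: "subspace (Q ` M)" using linear_subspace_image[OF Q_lin sM] .
    obtain C where C: "C \<subseteq> Q ` M" "independent C" "Q ` M \<subseteq> span C" "card C = dim (Q ` M)"
      by (rule basis_exists[of "Q ` M"])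
    have fC: "finite C" using independent_span_bound[OF B1(1) C(2)] C(1) B1(2) by blast
    define g where "g = (\<lambda>c. SOME d. d \<in> M \<and> Q d = c)"
    have g: "g c \<in> M \<and> Q (g c) = c" if "c \<in> C" for c
      unfolding g_def by (rule someI_ex) (use that C(1) in auto)
    define D where "D = g ` C"
    have fD: "finite D" using fC D_def by simp
    have QD: "Q ` D = C" unfolding D_def using g by force
    have DM: "span D \<subseteq> M" using g D_def sM by (intro span_minimal) auto
    have MD: "M \<subseteq> span D"
    proof
      fix x assume x: "x \<in> M"
      then have "Q x \<in> span C" using C(3) by auto
      then have "Q x \<in> Q ` span D" using QD span_linear_image[OF Q_lin, of D] by simp
      then obtain y where y: "y \<in> span D" "Q y = Q x" by auto
      have "x - y \<in> M" using DM y x sM subspace_diff by blast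
      moreover have "Q (x - y) = 0" using y by (simp add: Q_diff)
      ultimately have "x - y = 0" using inj by blast
      then show "x \<in> span D" using y by simp
    qed
    define S where "S = M \<inter> sphere 0 1"
    have eqS: "S = (span D \<inter> cball 0 1) \<inter> S" using MD S_def by auto
    have clS: "closed S" unfolding S_def using cM by (intro closed_Int closed_unit_sphere)
    have "compact ((span D \<inter> cball 0 1) \<inter> S)"
      by (rule compact_Int_closed[OF compact_span_cball[OF fD] clS])
    then have cS: "compact S" using eqS by simp
    have nS: "S \<noteq> {}" using unit_exists[OF sM M(2)] S_def by auto
    have "continuous_on S (\<lambda>x. norm (Q x))"
      by (intro continuous_on_norm linear_continuous_on Q_bl)
    then obtain x0 where "x0 \<in> S" "\<forall>y\<in>S. norm (Q x0) \<le> norm (Q y)"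
      using continuous_attains_inf[OF cS nS] by blast
    then show ?thesis by (intro N_star_of_min[of x0]) (auto simp: S_def)
  qed
qed

end



lemma parallelogram: "(norm (a - b))^2 + (norm (a + b))^2 = 2 * (norm a)^2 + 2 * (norm (b::'a::real_inner))^2"
  by (simp add: power2_norm_eq_inner inner_add_left inner_add_right inner_diff_left inner_diff_right inner_commute[of b a])

lemma half_norm: "norm ((1/2) *\<^sub>R (a + b)) \<le> (1/2) * (norm a + norm (b::'a::real_normed_vector))"
  using norm_triangle_ineq[of a b] by simp

lemma halves: "(1/2) *\<^sub>R z + (1/2) *\<^sub>R z = (z::'a::real_vector)"
  by (simp flip: scaleR_add_left)

context oproj begin

lemma case2:
  assumes fin: "cfinite_dim J {x. Q x = 0}" and M: "closed_csubspace J M" "M \<noteq> {0}"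
  shows "N_star Q M"
proof -
  have sM: "subspace M" and cM: "closed M" using M by (auto simp: closed_csubspace_def)
  obtain B2 where B2: "finite B2" "{x. Q x = 0} \<subseteq> span B2" using cfin_span[OF fin] by blast
  define P where "P = (\<lambda>x. x - Q x)"
  have PK: "P x \<in> span B2" for x using B2(2) by (auto simp: P_def Q_diff)
  have Pn: "norm (P x) \<le> norm x" for x
  proof -
    have "(norm (P x))^2 \<le> (norm x)^2" using pyth[of x] unfolding P_def by simp
    then show ?thesis by (rule power2_le_imp_le) simp
  qed
  have P_add: "P (a + b) = P a + P b" for a b by (simp add: P_def Q_add)
  have P_scale: "P (c *\<^sub>R a) = c *\<^sub>R P a" for c a by (simp add: P_def Q_scale algebra_simps)
  have P_bl: "bounded_linear P" unfolding P_def by (intro bounded_linear_sub bounded_linear_ident Q_bl)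
  define A where "A = {norm (P x) | x. x \<in> M \<and> norm x = 1}"
  obtain u0 where u0: "u0 \<in> M" "norm u0 = 1" using unit_exists[OF sM M(2)] by blast
  have An: "A \<noteq> {}" using u0 A_def by auto
  have Ab: "bdd_above A"
  proof (rule bdd_aboveI[of _ 1])
    fix a assume "a \<in> A"
    then obtain x where "a = norm (P x)" "norm x = 1" unfolding A_def by blast
    then show "a \<le> 1" using Pn[of x] by simp
  qed
  define s where "s = Sup A"
  have up: "norm (P x) \<le> s" if "x \<in> M" "norm x = 1" for x
    unfolding s_def by (rule cSup_upper[OF _ Ab]) (use that A_def in auto)
  have s0: "0 \<le> s" using up[OF u0] norm_ge_zero[of "P u0"] by linarith
  have "\<exists>x0\<in>M. norm x0 = 1 \<and> s \<le> norm (P x0)"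
  proof (cases "s = 0")
    case True then show ?thesis using u0 by auto
  next
    case False
    then have spos: "s > 0" using s0 by simp
    have "\<exists>x. x \<in> M \<and> norm x = 1 \<and> s - inverse (real (Suc n)) < norm (P x)" for n
    proof -
      have "s - inverse (real (Suc n)) < Sup A" unfolding s_def[symmetric] by simp
      then obtain a where "a \<in> A" "s - inverse (real (Suc n)) < a"
        using less_cSup_iff[OF An Ab] by blast
      then show ?thesis unfolding A_def by auto
    qed
    then obtain xs where xs: "\<And>n. xs n \<in> M \<and> norm (xs n) = 1 \<and> s - inverse (real (Suc n)) < norm (P (xs n))"
      by metis
    have "P (xs n) \<in> span B2 \<inter> cball 0 1" for n using PK Pn[of "xs n"] xs[of n] by auto
    then obtain z r where r: "strict_mono r" and Pz: "((\<lambda>n. P (xs n)) \<circ> r) \<longlonglongrightarrow> z"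
      using compact_imp_seq_compact[OF compact_span_cball[OF B2(1), of 1]] unfolding seq_compact_def
      by metis
    define y where "y n = xs (r n)" for n
    have yM: "y n \<in> M" and yn: "norm (y n) = 1" for n using xs y_def by auto
    have Py: "(\<lambda>n. P (y n)) \<longlonglongrightarrow> z" using Pz by (simp add: y_def o_def)
    have lowlim0: "(\<lambda>n. s - inverse (real (Suc (r n)))) \<longlonglongrightarrow> s - 0"
    proof -
      have "((\<lambda>n. inverse (real (Suc n))) \<circ> r) \<longlonglongrightarrow> 0"
        by (rule LIMSEQ_subseq_LIMSEQ[OF LIMSEQ_inverse_real_of_nat r])
      then show ?thesis by (intro tendsto_diff tendsto_const) (simp add: o_def)
    qed
    have lowlim: "(\<lambda>n. s - inverse (real (Suc (r n)))) \<longlonglongrightarrow> s"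
      using lowlim0 by (simp only: diff_zero)
    have nPy: "(\<lambda>n. norm (P (y n))) \<longlonglongrightarrow> s"
    proof (rule tendsto_sandwich[OF _ _ lowlim tendsto_const])
      show "\<forall>\<^sub>F n in sequentially. s - inverse (real (Suc (r n))) \<le> norm (P (y n))"
      proof (rule always_eventually, rule allI)
        fix n
        have "s - inverse (real (Suc (r n))) < norm (P (xs (r n)))" using xs by blast
        then show "s - inverse (real (Suc (r n))) \<le> norm (P (y n))" unfolding y_def by simp
      qed
      show "\<forall>\<^sub>F n in sequentially. norm (P (y n)) \<le> s"
        using up yM yn by (intro always_eventually allI) blast
    qed
    have nz: "norm z = s" using LIMSEQ_unique[OF tendsto_norm[OF Py] nPy] .
    have Cy: "Cauchy y"
      unfolding Cauchy_def
    proof (intro allI impI)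
      fix e :: real assume e: "e > 0"
      define d where "d = e^2 * s / 8"
      have dpos: "d > 0" unfolding d_def using e spos by (intro divide_pos_pos mult_pos_pos) auto
      obtain N where N: "\<And>n. n \<ge> N \<Longrightarrow> norm (P (y n) - z) < d"
        using LIMSEQ_D[OF Py dpos] by blast
      show "\<exists>N. \<forall>m\<ge>N. \<forall>n\<ge>N. dist (y m) (y n) < e"
      proof (intro exI allI impI)
        fix m n assume mn: "m \<ge> N" "n \<ge> N"
        define w where "w = (1/2) *\<^sub>R (y m + y n)"
        have wM: "w \<in> M" unfolding w_def using sM yM by (intro subspace_scale subspace_add)
        have "P w - z = (1/2) *\<^sub>R ((P (y m) - z) + (P (y n) - z))"
          unfolding w_def P_scale P_add by (simp add: algebra_simps halves)
        then have "norm (P w - z) \<le> (1/2) * (norm (P (y m) - z) + norm (P (y n) - z))"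
          using half_norm by metis
        also have "\<dots> < d" using N[OF mn(1)] N[OF mn(2)] by simp
        finally have wz: "norm (P w - z) < d" .
        have "s \<le> norm (P w) + norm (P w - z)"
          using norm_triangle_ineq4[of "P w" "P w - z"] nz by simp
        then have Pwlow: "s - d < norm (P w)" using wz by linarith
        have wle: "norm (P w) \<le> s * norm w"
        proof (cases "w = 0")
          case True then show ?thesis using P_scale[of 0 0] by simp
        next
          case False
          have uM: "inverse (norm w) *\<^sub>R w \<in> M" using sM wM by (rule subspace_scale)
          have "norm (P (inverse (norm w) *\<^sub>R w)) \<le> s" using up[OF uM] False by simp
          moreover have "norm (P (inverse (norm w) *\<^sub>R w)) = norm (P w) / norm w"
            by (simp add: P_scale field_simps)
          ultimately have "norm (P w) / norm w \<le> s" by simp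
          then show ?thesis using False by (simp add: pos_divide_le_eq)
        qed
        have w1: "norm w \<le> 1"
        proof -
          have "norm (y m + y n) \<le> 2" using norm_triangle_ineq[of "y m" "y n"] yn by simp
          then show ?thesis unfolding w_def by simp
        qed
        have wlow: "1 - e^2/8 < norm w"
        proof -
          have "s - d < s * norm w" using Pwlow wle by linarith
          then have "s * (1 - e^2/8) < s * norm w" unfolding d_def by (simp add: algebra_simps)
          then show ?thesis using spos by (simp add: mult_less_cancel_left_pos)
        qed
        have "(norm (y m - y n))^2 = 4 - 4 * (norm w)^2"
        proof -
          have "norm (y m + y n) = 2 * norm w" unfolding w_def by simp
          then show ?thesis using parallelogram[of "y m" "y n"] yn by (simp add: power_mult_distrib)
        qed
        also have "\<dots> = 4 * (1 - norm w) * (1 + norm w)" by (simp add: algebra_simps power2_eq_square)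
        also have "\<dots> \<le> 4 * (1 - norm w) * 2"
          using w1 by (intro mult_left_mono) auto
        also have "\<dots> < e^2" using wlow by (simp add: field_simps)
        finally have "(norm (y m - y n))^2 < e^2" .
        then have "norm (y m - y n) < e" by (rule power_less_imp_less_base) (use e in simp)
        then show "dist (y m) (y n) < e" by (simp add: dist_norm)
      qed
    qed
    then obtain x0 where x0: "y \<longlonglongrightarrow> x0" using Cauchy_convergent_iff convergent_def by blast
    have "x0 \<in> M" using cM yM x0 closed_sequential_limits by blast
    moreover have "norm x0 = 1"
    proof -
      have "(\<lambda>n. norm (y n)) \<longlonglongrightarrow> 1" using yn by simp
      then show ?thesis using LIMSEQ_unique[OF tendsto_norm[OF x0]] by blast
    qed
    moreover have "P x0 = z"
      using LIMSEQ_unique[OF bounded_linear.tendsto[OF P_bl x0] Py] .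
    ultimately show ?thesis using nz by auto
  qed
  then obtain x0 where x0: "x0 \<in> M" "norm x0 = 1" "s \<le> norm (P x0)" by blast
  show ?thesis
  proof (rule N_star_of_min[OF x0(1,2)])
    fix x assume x: "x \<in> M" "norm x = 1"
    have "norm (P x) \<le> norm (P x0)" using up[OF x] x0 by simp
    then have "(norm (P x))^2 \<le> (norm (P x0))^2" by (rule power_mono) simp
    moreover have "(norm (Q x))^2 = 1 - (norm (P x))^2" using pyth[of x] x(2) unfolding P_def by simp
    moreover have "(norm (Q x0))^2 = 1 - (norm (P x0))^2" using pyth[of x0] x0(2) unfolding P_def by simp
    ultimately have "(norm (Q x0))^2 \<le> (norm (Q x))^2" by linarith
    then show "norm (Q x0) \<le> norm (Q x)" by (rule power2_le_imp_le) simp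
  qed
qed

end



definition goodv :: "('a::real_inner \<Rightarrow> 'a) \<Rightarrow> 'a set \<Rightarrow> 'a set \<Rightarrow> 'a \<Rightarrow> bool" where
  "goodv J S F e \<longleftrightarrow> e \<in> S \<and> norm e = 1 \<and> (\<forall>b\<in>F. inner e b = 0 \<and> inner e (J b) = 0)"

definition JON :: "('a::real_inner \<Rightarrow> 'a) \<Rightarrow> 'a set \<Rightarrow> bool" where
  "JON J F \<longleftrightarrow> (\<forall>a\<in>F. norm a = 1) \<and> (\<forall>a\<in>F. \<forall>b\<in>F. a \<noteq> b \<longrightarrow> inner a b = 0)
     \<and> (\<forall>a\<in>F. \<forall>b\<in>F. inner a (J b) = 0)"

fun gsq :: "('a::real_inner \<Rightarrow> 'a) \<Rightarrow> 'a set \<Rightarrow> nat \<Rightarrow> 'a list" where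
  "gsq J S 0 = []"
| "gsq J S (Suc n) = (SOME e. goodv J S (set (gsq J S n)) e) # gsq J S n"

context cstr begin

lemma step_exists:
  assumes sS: "subspace S" and JS: "\<forall>x\<in>S. J x \<in> S" and nf: "\<not> cfinite_dim J S"
    and F: "finite F" "F \<subseteq> S" and on: "JON J F"
  shows "\<exists>e. goodv J S F e"
proof -
  have n1: "inner a a = 1" if "a \<in> F" for a
    using on that unfolding JON_def by (metis power2_norm_eq_inner power_one)
  have o1: "inner a b = 0" if "a \<in> F" "b \<in> F" "a \<noteq> b" for a b using on that unfolding JON_def by blast
  have o2: "inner a (J b) = 0" if "a \<in> F" "b \<in> F" for a b using on that unfolding JON_def by blast
  have scS: "scaleC J c b \<in> S" if "b \<in> S" for c b
    unfolding scaleC_def using sS that JS by (intro subspace_add subspace_scale) auto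
  have cF: "cspan J F \<subseteq> S"
  proof
    fix x assume "x \<in> cspan J F"
    then obtain G c where x: "x = (\<Sum>b\<in>G. scaleC J (c b) b)" "G \<subseteq> F" unfolding cspan_def by blast
    show "x \<in> S" unfolding x(1) using sS by (rule subspace_sum) (use x(2) F(2) scS in blast)
  qed
  then have "cspan J F \<noteq> S" using nf F(1,2) unfolding cfinite_dim_def by blast
  then obtain y where y: "y \<in> S" "y \<notin> cspan J F" using cF by blast
  define p where "p = (\<Sum>b\<in>F. inner y b *\<^sub>R b + inner y (J b) *\<^sub>R J b)"
  have peq: "p = (\<Sum>b\<in>F. scaleC J (Complex (inner y b) (inner y (J b))) b)"
    unfolding p_def scaleC_def by simp
  have pc: "p \<in> cspan J F" unfolding cspan_def mem_Collect_eq
    by (rule exI[of _ F], rule exI[of _ "\<lambda>b. Complex (inner y b) (inner y (J b))"]) (use peq F(1) in simp)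
  define y' where "y' = y - p"
  have y'0: "y' \<noteq> 0" using y(2) pc unfolding y'_def by auto
  have y'S: "y' \<in> S" unfolding y'_def using sS y(1) pc cF by (intro subspace_diff) auto
  have orth: "inner y' c = 0 \<and> inner y' (J c) = 0" if c: "c \<in> F" for c
  proof -
    have "inner p c = (\<Sum>b\<in>F. if b = c then inner y c else 0)"
      unfolding p_def inner_sum_left
    proof (rule sum.cong[OF refl])
      fix b assume b: "b \<in> F"
      have "inner (J b) c = 0" using J_skew[of b c] o2[OF b c] by simp
      moreover have "inner b c = (if b = c then 1 else 0)" using o1[OF b c] n1[OF c] by auto
      ultimately show "inner (inner y b *\<^sub>R b + inner y (J b) *\<^sub>R J b) c = (if b = c then inner y c else 0)"
        by (simp add: inner_add_left)
    qed
    also have "\<dots> = inner y c" using c F(1) by simp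
    finally have 1: "inner p c = inner y c" .
    have "inner p (J c) = (\<Sum>b\<in>F. if b = c then inner y (J c) else 0)"
      unfolding p_def inner_sum_left
    proof (rule sum.cong[OF refl])
      fix b assume b: "b \<in> F"
      have "inner b (J c) = 0" using o2[OF b c] by simp
      moreover have "inner (J b) (J c) = (if b = c then 1 else 0)" using o1[OF b c] n1[OF c] by auto
      ultimately show "inner (inner y b *\<^sub>R b + inner y (J b) *\<^sub>R J b) (J c) = (if b = c then inner y (J c) else 0)"
        by (simp add: inner_add_left)
    qed
    also have "\<dots> = inner y (J c)" using c F(1) by simp
    finally have 2: "inner p (J c) = inner y (J c)" .
    show ?thesis using 1 2 unfolding y'_def by (simp add: inner_diff_left)
  qed
  define e where "e = inverse (norm y') *\<^sub>R y'"
  have "goodv J S F e"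
    unfolding goodv_def e_def using y'0 orth subspace_scale[OF sS y'S] by auto
  then show ?thesis by blast
qed

lemma gsq_inv:
  assumes sS: "subspace S" and JS: "\<forall>x\<in>S. J x \<in> S" and nf: "\<not> cfinite_dim J S"
  shows "JON J (set (gsq J S n)) \<and> set (gsq J S n) \<subseteq> S \<and> goodv J S (set (gsq J S n)) (hd (gsq J S (Suc n)))"
proof (induction n)
  case 0
  have "\<exists>e. goodv J S {} e" using step_exists[OF sS JS nf, of "{}"] by (simp add: JON_def)
  then show ?case by (simp add: JON_def someI_ex)
next
  case (Suc n)
  define F where "F = set (gsq J S n)"
  define e where "e = hd (gsq J S (Suc n))"
  have g: "goodv J S F e" using Suc F_def e_def by simp
  have F: "JON J F" "F \<subseteq> S" using Suc F_def by auto
  have eqS: "set (gsq J S (Suc n)) = insert e F" by (simp add: F_def e_def)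
  have on: "JON J (insert e F)"
  proof -
    have a: "norm e = 1" "\<forall>b\<in>F. inner e b = 0 \<and> inner e (J b) = 0" using g unfolding goodv_def by auto
    have b: "\<forall>b\<in>F. inner b (J e) = 0"
    proof
      fix b assume "b \<in> F"
      then have "inner e (J b) = 0" using a by blast
      then have "inner (J b) e = 0" by (simp add: inner_commute)
      then show "inner b (J e) = 0" using J_skew[of b e] by simp
    qed
    show ?thesis using F(1) a b unfolding JON_def by (auto simp: inner_commute)
  qed
  have sub: "insert e F \<subseteq> S" using g F(2) unfolding goodv_def by auto
  have "\<exists>x. goodv J S (insert e F) x" using step_exists[OF sS JS nf _ sub on] by (simp add: F_def)
  then have "goodv J S (set (gsq J S (Suc n))) (hd (gsq J S (Suc (Suc n))))"
    unfolding gsq.simps(2)[of J S "Suc n"] list.sel(1) eqS by (rule someI_ex)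
  then show ?case unfolding eqS using on sub by blast
qed

lemma gsq_mem: "m < n \<Longrightarrow> hd (gsq J S (Suc m)) \<in> set (gsq J S n)"
proof (induction n)
  case 0 then show ?case by simp
next
  case (Suc n)
  then show ?case by (cases "m = n") auto
qed

lemma seq_exists:
  assumes sS: "subspace S" and JS: "\<forall>x\<in>S. J x \<in> S" and nf: "\<not> cfinite_dim J S"
  shows "\<exists>e::nat \<Rightarrow> 'a. \<forall>n. e n \<in> S \<and> norm (e n) = 1 \<and> (\<forall>m. m \<noteq> n \<longrightarrow> inner (e n) (e m) = 0)
            \<and> (\<forall>m. inner (e n) (J (e m)) = 0)"
proof -
  define e where "e n = hd (gsq J S (Suc n))" for n
  have g: "goodv J S (set (gsq J S n)) (e n)" for n using gsq_inv[OF assms] e_def by simp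
  have lt: "inner (e n) (e m) = 0 \<and> inner (e n) (J (e m)) = 0" if "m < n" for m n
    using g[of n] gsq_mem[OF that, of S] unfolding goodv_def e_def by auto
  have "e n \<in> S \<and> norm (e n) = 1 \<and> (\<forall>m. m \<noteq> n \<longrightarrow> inner (e n) (e m) = 0)
            \<and> (\<forall>m. inner (e n) (J (e m)) = 0)" for n
  proof (intro conjI allI impI)
    show "e n \<in> S" "norm (e n) = 1" using g[of n] unfolding goodv_def by auto
  next
    fix m assume "m \<noteq> n"
    then show "inner (e n) (e m) = 0"
      by (metis inner_commute lt nat_neq_iff)
  next
    fix m
    show "inner (e n) (J (e m)) = 0"
    proof (cases m n rule: linorder_cases)
      case less then show ?thesis using lt by blast
    next
      case equal then show ?thesis by simp
    next
      case greater
      then have "inner (e m) (J (e n)) = 0" using lt by blast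
      then have "inner (J (e n)) (e m) = 0" by (simp add: inner_commute)
      then show ?thesis using J_skew[of "e n" "e m"] by simp
    qed
  qed
  then have all: "\<forall>n. e n \<in> S \<and> norm (e n) = 1 \<and> (\<forall>m. m \<noteq> n \<longrightarrow> inner (e n) (e m) = 0)
            \<and> (\<forall>m. inner (e n) (J (e m)) = 0)" by blast
  show ?thesis by (rule exI[of _ e], rule all)
qed

end



context oproj begin

lemma not_AN:
  assumes nk: "\<not> cfinite_dim J {x. Q x = 0}" and nr: "\<not> cfinite_dim J (range Q)"
  shows "\<not> AN_star J Q"
proof
  assume AN: "AN_star J Q"
  have s1: "subspace (range Q)" using linear_subspace_image[OF Q_lin subspace_UNIV] by simp
  have j1: "\<forall>x\<in>range Q. J x \<in> range Q" by (auto simp flip: QJ)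
  have s2: "subspace {x. Q x = 0}" unfolding subspace_def by (simp add: Q_add Q_scale)
  have j2: "\<forall>x\<in>{x. Q x = 0}. J x \<in> {x. Q x = 0}" by (simp add: QJ)
  obtain e :: "nat \<Rightarrow> 'a" where e: "\<And>n. e n \<in> range Q" "\<And>n. norm (e n) = 1"
      "\<And>n m. m \<noteq> n \<Longrightarrow> inner (e n) (e m) = 0" "\<And>n m. inner (e n) (J (e m)) = 0"
    using seq_exists[OF s1 j1 nr] by blast
  obtain f :: "nat \<Rightarrow> 'a" where f: "\<And>n. f n \<in> {x. Q x = 0}" "\<And>n. norm (f n) = 1"
      "\<And>n m. m \<noteq> n \<Longrightarrow> inner (f n) (f m) = 0" "\<And>n m. inner (f n) (J (f m)) = 0"
    using seq_exists[OF s2 j2 nk] by blast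
  have Qe: "Q (e n) = e n" for n using e(1)[of n] by auto
  have QJe: "Q (J (e n)) = J (e n)" for n using Qe[of n] by (simp add: QJ)
  have Qf: "Q (f n) = 0" for n using f(1)[of n] by auto
  have QJf: "Q (J (f n)) = 0" for n using Qf[of n] by (simp add: QJ)
  have ee: "inner (e k) (e n) = (if k = n then 1 else 0)" for k n
    using e(3)[of n k] e(2)[of n] by (auto simp: power2_norm_eq_inner[symmetric])
  have ff: "inner (f k) (f n) = (if k = n then 1 else 0)" for k n
    using f(3)[of n k] f(2)[of n] by (auto simp: power2_norm_eq_inner[symmetric])
  have ef: "inner (e k) (f n) = 0" "inner (e k) (J (f n)) = 0"
     "inner (f n) (e k) = 0" "inner (f n) (J (e k)) = 0" for k n
    using rk_orth[OF Qe Qf] rk_orth[OF Qe QJf] rk_orth[OF QJe Qf]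
    by (auto simp: inner_commute)
  define t where "t n = inverse (real (Suc n))" for n
  have tpos: "t n > 0" for n by (simp add: t_def)
  define Z where "Z = {z. Q z = 0 \<and> (\<forall>n. inner z (f n) = 0 \<and> inner z (J (f n)) = 0)}"
  define M where "M = {y. (\<forall>n. t n * inner y (f n) = inner y (e n) \<and> t n * inner y (J (f n)) = inner y (J (e n)))
                          \<and> (\<forall>z\<in>Z. inner y z = 0)}"
  have JZ: "J z \<in> Z" if "z \<in> Z" for z
  proof -
    have "Q (J z) = 0" using that by (simp add: Z_def QJ)
    moreover have "inner (J z) (f n) = 0" for n using that J_skew[of z "f n"] by (simp add: Z_def)
    moreover have "inner (J z) (J (f n)) = 0" for n using that by (simp add: Z_def)
    ultimately show ?thesis by (simp add: Z_def)
  qed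
  have Meq: "M = (\<Inter>n. {y. t n * inner y (f n) = inner y (e n)}) \<inter> (\<Inter>n. {y. t n * inner y (J (f n)) = inner y (J (e n))})
                 \<inter> (\<Inter>z\<in>Z. {y. inner y z = 0})"
    unfolding M_def by auto
  have cM: "closed M" unfolding Meq
    by (intro closed_Int closed_INT ballI closed_Collect_eq continuous_intros)
  have sM: "subspace M"
    unfolding subspace_def
  proof (intro conjI ballI allI)
    show "0 \<in> M" by (simp add: M_def)
  next
    fix x y assume x: "x \<in> M" and y: "y \<in> M"
    show "x + y \<in> M" using x y by (simp add: M_def inner_add_left distrib_left)
  next
    fix c :: real and x assume x: "x \<in> M"
    have "t n * inner (c *\<^sub>R x) (f n) = inner (c *\<^sub>R x) (e n)" for n
    proof -
      have "t n * inner x (f n) = inner x (e n)" using x by (simp add: M_def)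
      then show ?thesis by (simp add: mult.left_commute)
    qed
    moreover have "t n * inner (c *\<^sub>R x) (J (f n)) = inner (c *\<^sub>R x) (J (e n))" for n
    proof -
      have "t n * inner x (J (f n)) = inner x (J (e n))" using x by (simp add: M_def)
      then show ?thesis by (simp add: mult.left_commute)
    qed
    moreover have "\<forall>z\<in>Z. inner (c *\<^sub>R x) z = 0" using x by (simp add: M_def)
    ultimately show "c *\<^sub>R x \<in> M" by (simp add: M_def)
  qed
  have JM: "J y \<in> M" if y: "y \<in> M" for y
  proof -
    have "t n * inner (J y) (f n) = inner (J y) (e n)" for n
    proof -
      have "t n * inner y (J (f n)) = inner y (J (e n))" using y by (simp add: M_def)
      then show ?thesis using J_skew[of y "f n"] J_skew[of y "e n"] by simp
    qed
    moreover have "t n * inner (J y) (J (f n)) = inner (J y) (J (e n))" for n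
      using y by (simp add: M_def)
    moreover have "\<forall>z\<in>Z. inner (J y) z = 0"
    proof
      fix z assume "z \<in> Z"
      then have "inner y (J z) = 0" using y JZ by (simp add: M_def)
      then show "inner (J y) z = 0" using J_skew[of y z] by simp
    qed
    ultimately show ?thesis by (simp add: M_def)
  qed
  have ccM: "closed_csubspace J M" using cM sM JM by (simp add: closed_csubspace_def)
  define u where "u n = t n *\<^sub>R e n + f n" for n
  have uM: "u k \<in> M" for k
  proof -
    have "t n * inner (u k) (f n) = inner (u k) (e n)" for n
      by (simp add: u_def inner_add_left ef ee ff)
    moreover have "t n * inner (u k) (J (f n)) = inner (u k) (J (e n))" for n
      by (simp add: u_def inner_add_left ef e(4) f(4))
    moreover have "\<forall>z\<in>Z. inner (u k) z = 0"
    proof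
      fix z assume z: "z \<in> Z"
      then have "inner (e k) z = 0" using rk_orth[OF Qe] by (simp add: Z_def)
      moreover have "inner (f k) z = 0" using z by (simp add: Z_def inner_commute)
      ultimately show "inner (u k) z = 0" by (simp add: u_def inner_add_left)
    qed
    ultimately show ?thesis by (simp add: M_def)
  qed
  have Qu: "Q (u n) = t n *\<^sub>R e n" for n by (simp add: u_def Q_add Q_scale Qe Qf)
  have nu: "norm (u n) \<ge> 1" for n
  proof -
    have "(norm (u n))^2 = (norm (t n *\<^sub>R e n))^2 + (norm (f n))^2"
      unfolding u_def by (rule norm_add_Pythagorean) (simp add: orthogonal_def ef)
    then have "(norm (u n))^2 \<ge> 1^2" using f(2) by simp
    then show ?thesis by (rule power2_le_imp_le) simp
  qed
  have M0: "M \<noteq> {0}" using uM[of 0] nu[of 0] by auto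
  have NS: "N_star Q M" using AN ccM M0 unfolding AN_star_def by blast
  then obtain x0 where x0: "x0 \<in> M" "norm x0 = 1" "norm (Q x0) = lower_bound_on Q M"
    unfolding N_star_def by blast
  have bdd: "bdd_below {norm (Q x) |x. x \<in> M \<and> norm x = 1}"
    by (rule bdd_belowI[of _ 0]) auto
  have lbt: "norm (Q x0) \<le> t n" for n
  proof -
    define v where "v = inverse (norm (u n)) *\<^sub>R u n"
    have vM: "v \<in> M" unfolding v_def using sM uM by (rule subspace_scale)
    have "norm (u n) \<noteq> 0" using nu[of n] by linarith
    then have vn: "norm v = 1" unfolding v_def by simp
    have "norm (Q v) = t n / norm (u n)" unfolding v_def
      using tpos[of n] e(2)[of n] by (simp add: Q_scale Qu field_simps)
    also have "\<dots> \<le> t n" using nu[of n] tpos[of n] by (simp add: divide_le_eq)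
    finally have "norm (Q v) \<le> t n" .
    moreover have "lower_bound_on Q M \<le> norm (Q v)"
      unfolding lower_bound_on_def by (rule cInf_lower[OF _ bdd]) (use vM vn in auto)
    ultimately show ?thesis using x0(3) by simp
  qed
  have "norm (Q x0) = 0"
  proof (rule ccontr)
    assume "norm (Q x0) \<noteq> 0"
    then have "norm (Q x0) > 0" by simp
    then obtain n where "inverse (real (Suc n)) < norm (Q x0)" using reals_Archimedean by blast
    then show False using lbt[of n] by (simp add: t_def)
  qed
  then have Qx0: "Q x0 = 0" by simp
  have "x0 \<in> Z"
  proof -
    have a: "inner x0 (e n) = 0" for n using Q_sa[of x0 "e n"] Qe[of n] Qx0 by simp
    have b: "inner x0 (J (e n)) = 0" for n using Q_sa[of x0 "J (e n)"] QJe[of n] Qx0 by simp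
    have c: "t n * inner x0 (f n) = 0" "t n * inner x0 (J (f n)) = 0" for n
      using x0(1) a b by (auto simp: M_def)
    have "inner x0 (f n) = 0 \<and> inner x0 (J (f n)) = 0" for n
      using c[of n] tpos[of n] by simp
    then show ?thesis using Qx0 by (simp add: Z_def)
  qed
  then have "inner x0 x0 = 0" using x0(1) by (simp add: M_def)
  then show False using x0(2) by simp
qed

end

theorem theorem3p10:
  fixes J Q :: "'a::{real_inner, complete_space} \<Rightarrow> 'a"
  assumes "complex_structure J"
    and "orth_proj J Q"
  shows "AN_star J Q \<longleftrightarrow> cfinite_dim J {x. Q x = 0} \<or> cfinite_dim J (range Q)"
proof -
  interpret oproj J Q by unfold_locales (use assms in auto)
  show ?thesis
  proof
    assume "AN_star J Q"
    then show "cfinite_dim J {x. Q x = 0} \<or> cfinite_dim J (range Q)" using not_AN by blast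
  next
    assume h: "cfinite_dim J {x. Q x = 0} \<or> cfinite_dim J (range Q)"
    show "AN_star J Q" unfolding AN_star_def
    proof (intro allI impI)
      fix M assume "closed_csubspace J M \<and> M \<noteq> {0}"
      then show "N_star Q M" using h case1 case2 by blast
    qed
  qed
qed



end
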